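(* For every positive integer $n$ and every function $\sigma\colon E(K_{4n})\to\{-1,1\}$ with $\left|\sigma\left(E(K_{4n})\right)\right|<n^2+11n+2$, there is a perfect matching $M$ in $K_{4n}$ with $|\sigma(M)|\leq 2$.
   Context: $K_{4n}$ denotes the complete graph on $4n$ vertices and $E(K_{4n})$ its edge set. For a set $F$ of edges, $\sigma(F)=\sum_{e\in F}\sigma(e)$. *)

theory Defs
  imports Main
begin

definition edges_K :: "nat \<Rightarrow> nat set set" where
  "edges_K m = {e. \<exists>u v. u < m \<and> v < m \<and> u \<noteq> v \<and> e = {u, v}}"

definition perfect_matching :: "nat \<Rightarrow> nat set set \<Rightarrow> bool" where
  "perfect_matching m M \<longleftrightarrow> M \<subseteq> edges_K m \<and> (\<forall>v<m. \<exists>!e. e \<in> M \<and> v \<in> e)"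

end

theory Submission
  imports Defs
begin



lemma edges_K_iff: "e \<in> edges_K m \<longleftrightarrow> e \<subseteq> {0..<m} \<and> card e = 2"
  unfolding edges_K_def card_2_iff by (auto; blast)

lemma edges_K_eq: "edges_K m = {e. e \<subseteq> {0..<m} \<and> card e = 2}"
  using edges_K_iff by blast

lemma finite_edges_K: "finite (edges_K m)"
  unfolding edges_K_eq by (rule finite_subset[of _ "Pow {0..<m}"]) auto

lemma card_edges_K: "card (edges_K m) = m choose 2"
  unfolding edges_K_eq using n_subsets[of "{0..<m}" 2] by simp

definition pdisj :: "nat set set \<Rightarrow> bool" where
  "pdisj M \<longleftrightarrow> (\<forall>e\<in>M. \<forall>f\<in>M. e \<noteq> f \<longrightarrow> e \<inter> f = {})"

lemma pm_iff: "perfect_matching m M \<longleftrightarrow> M \<subseteq> edges_K m \<and> pdisj M \<and> \<Union>M = {0..<m}"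
proof
  assume a: "perfect_matching m M"
  hence sub: "M \<subseteq> edges_K m" unfolding perfect_matching_def by auto
  hence s2: "\<Union>M \<subseteq> {0..<m}" using edges_K_iff by blast
  have "pdisj M" unfolding pdisj_def
  proof (intro ballI impI)
    fix e f assume "e \<in> M" "f \<in> M" "e \<noteq> f"
    show "e \<inter> f = {}"
    proof (rule ccontr)
      assume "e \<inter> f \<noteq> {}"
      then obtain v where v: "v \<in> e" "v \<in> f" by auto
      hence "v < m" using s2 \<open>e\<in>M\<close> by auto
      thus False using a v \<open>e \<in> M\<close> \<open>f \<in> M\<close> \<open>e \<noteq> f\<close> unfolding perfect_matching_def by blast
    qed
  qed
  moreover have "{0..<m} \<subseteq> \<Union>M" using a unfolding perfect_matching_def by auto
  ultimately show "M \<subseteq> edges_K m \<and> pdisj M \<and> \<Union>M = {0..<m}" using sub s2 by auto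
next
  assume "M \<subseteq> edges_K m \<and> pdisj M \<and> \<Union>M = {0..<m}"
  thus "perfect_matching m M" unfolding perfect_matching_def pdisj_def by auto
qed

lemma card_Union_edges:
  assumes "M \<subseteq> edges_K m" "pdisj M"
  shows "card (\<Union>M) = 2 * card M"
proof -
  have "card (\<Union>M) = sum card M"
  proof (rule card_Union_disjoint)
    show "pairwise disjnt M" using assms(2) by (auto simp: pairwise_def disjnt_def pdisj_def)
    fix A assume "A \<in> M"
    hence "A \<subseteq> {0..<m}" using assms(1) edges_K_iff by blast
    thus "finite A" using finite_subset by blast
  qed
  also have "\<dots> = sum (\<lambda>_. 2) M" using assms(1) by (intro sum.cong) (auto simp: edges_K_iff)
  finally show ?thesis by simp
qed

lemma finite_sub_edges: "M \<subseteq> edges_K m \<Longrightarrow> finite M"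
  using finite_edges_K finite_subset by blast

lemma pm_card: "perfect_matching m M \<Longrightarrow> 2 * card M = m"
  using card_Union_edges[of M m] by (simp add: pm_iff)

lemma sum_pm1:
  assumes "finite A" "\<forall>e\<in>A. \<sigma> e \<in> {-1,1::int}"
  shows "(\<Sum>e\<in>A. \<sigma> e) = int (card A) - 2 * int (card {e\<in>A. \<sigma> e = -1})"
  using assms
proof (induction A rule: finite_induct)
  case empty thus ?case by simp
next
  case (insert x F)
  have "{e\<in>insert x F. \<sigma> e = -1} = (if \<sigma> x = -1 then insert x {e\<in>F. \<sigma> e = -1} else {e\<in>F. \<sigma> e = -1})" by auto
  moreover have "finite {e\<in>F. \<sigma> e = -1}" using insert by auto
  moreover have "x \<notin> {e\<in>F. \<sigma> e = -1}" using insert by auto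
  ultimately show ?case using insert by auto
qed




lemma pdisjD: "pdisj M \<Longrightarrow> e \<in> M \<Longrightarrow> f \<in> M \<Longrightarrow> x \<in> e \<Longrightarrow> x \<in> f \<Longrightarrow> e = f"
  unfolding pdisj_def by blast

lemma switch:
  assumes pm1: "perfect_matching m M1" and pm2: "perfect_matching m M2" and ne: "M1 \<noteq> M2"
    and sig: "\<forall>e\<in>edges_K m. \<sigma> e \<in> {-1,1::int}"
  shows "\<exists>M1'. perfect_matching m M1' \<and> card (M2 - M1') < card (M2 - M1) \<and>
     (\<Sum>e\<in>M1'. \<sigma> e) \<le> (\<Sum>e\<in>M1. \<sigma> e) + 4"
proof -
  have s1: "M1 \<subseteq> edges_K m" "pdisj M1" "\<Union>M1 = {0..<m}" using pm1 pm_iff by auto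
  have s2: "M2 \<subseteq> edges_K m" "pdisj M2" "\<Union>M2 = {0..<m}" using pm2 pm_iff by auto
  have f1: "finite M1" "finite M2" using s1 s2 finite_sub_edges by auto
  have cc: "card M1 = card M2" using pm_card[OF pm1] pm_card[OF pm2] by simp
  have "\<not> M2 \<subseteq> M1"
  proof
    assume "M2 \<subseteq> M1" thus False using card_subset_eq[OF f1(1)] cc ne by metis
  qed
  then obtain e where e: "e \<in> M2" "e \<notin> M1" by auto
  then obtain a b where ab: "e = {a,b}" "a \<noteq> b" "a < m" "b < m"
    using s2(1) unfolding edges_K_def by blast
  have "a \<in> \<Union>M1" "b \<in> \<Union>M1" using s1(3) ab by auto
  then obtain ea eb where ea: "ea \<in> M1" "a \<in> ea" and eb: "eb \<in> M1" "b \<in> eb" by blast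
  obtain c where c: "ea = {a,c}" "a \<noteq> c"
    using ea s1(1) unfolding edges_K_def by blast
  obtain d where d: "eb = {b,d}" "b \<noteq> d"
    using eb s1(1) unfolding edges_K_def by blast
  have "ea \<noteq> e" using e ea by auto
  hence cb: "c \<noteq> b" using c ab by auto
  have "eb \<noteq> e" using e eb by auto
  hence da: "d \<noteq> a" using d ab by auto
  have eaeb: "ea \<noteq> eb" using cb c d ab eb by auto
  hence dis: "ea \<inter> eb = {}" using s1(2) ea eb unfolding pdisj_def by blast
  have cd: "c \<noteq> d" using dis c d by auto
  have ac: "a \<noteq> d" "b \<noteq> c" using dis c d by auto
  have "c \<in> \<Union>M1" "d \<in> \<Union>M1" using ea eb c d by auto
  hence cm: "c < m" "d < m" unfolding s1(3) by auto
  have eaM2: "ea \<notin> M2" using \<open>ea \<noteq> e\<close>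
  proof (rule contrapos_nn)
    assume "ea \<in> M2"
    thus "ea = e" using pdisjD[OF s2(2) _ e(1), of ea a] ea ab by simp
  qed
  have ebM2: "eb \<notin> M2" using \<open>eb \<noteq> e\<close>
  proof (rule contrapos_nn)
    assume "eb \<in> M2"
    thus "eb = e" using pdisjD[OF s2(2) _ e(1), of eb b] eb ab by simp
  qed
  define R where "R = M1 - {ea, eb}"
  define M1' where "M1' = R \<union> {e, {c,d}}"
  have Rdis: "\<forall>f\<in>R. f \<inter> {a,b,c,d} = {}"
  proof
    fix f assume "f \<in> R"
    hence "f \<in> M1" "f \<noteq> ea" "f \<noteq> eb" unfolding R_def by auto
    hence "f \<inter> ea = {}" "f \<inter> eb = {}" using s1(2) ea eb unfolding pdisj_def by auto
    thus "f \<inter> {a,b,c,d} = {}" using c d by auto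
  qed
  have cdE: "{c,d} \<in> edges_K m" using cm cd unfolding edges_K_def by blast
  have cdR: "{c,d} \<notin> R" using Rdis by auto
  have eR: "e \<notin> R" using e unfolding R_def by auto
  have ecd: "e \<noteq> {c,d}" using ab cb ac c(2) by (auto simp: doubleton_eq_iff)
  have "perfect_matching m M1'"
    unfolding pm_iff
  proof (intro conjI)
    show "M1' \<subseteq> edges_K m" unfolding M1'_def R_def using s1(1) s2(1) e(1) cdE by auto
    show "pdisj M1'" unfolding pdisj_def M1'_def
    proof (intro ballI impI)
      fix f g assume "f \<in> R \<union> {e, {c, d}}" "g \<in> R \<union> {e, {c, d}}" "f \<noteq> g"
      have RR: "f \<in> R \<Longrightarrow> g \<in> R \<Longrightarrow> f \<inter> g = {}"
        using s1(2) \<open>f \<noteq> g\<close> unfolding R_def pdisj_def by blast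
      have ee: "e \<inter> {c,d} = {}" using ab cb ac cd da c(2) d(2) by auto
      show "f \<inter> g = {}"
      proof (cases "f \<in> R")
        case True
        show ?thesis
        proof (cases "g \<in> R")
          case True thus ?thesis using RR \<open>f \<in> R\<close> by blast
        next
          case False
          hence "g \<subseteq> {a,b,c,d}" using \<open>g \<in> R \<union> {e, {c, d}}\<close> ab by auto
          thus ?thesis using Rdis \<open>f \<in> R\<close> by blast
        qed
      next
        case False
        hence ff: "f \<subseteq> {a,b,c,d}" using \<open>f \<in> R \<union> {e, {c, d}}\<close> ab by auto
        show ?thesis
        proof (cases "g \<in> R")
          case True thus ?thesis using Rdis ff by blast
        next
          case False
          thus ?thesis using \<open>f \<notin> R\<close> \<open>f \<in> R \<union> {e, {c, d}}\<close> \<open>g \<in> R \<union> {e, {c, d}}\<close> \<open>f \<noteq> g\<close> ee by auto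
        qed
      qed
    qed
    have "\<Union>M1 = \<Union>R \<union> ea \<union> eb" unfolding R_def using ea eb by auto
    thus "\<Union>M1' = {0..<m}" unfolding M1'_def using s1(3) c d ab by auto
  qed
  moreover have "card (M2 - M1') < card (M2 - M1)"
  proof (rule psubset_card_mono)
    show "finite (M2 - M1)" using f1 by auto
    show "M2 - M1' \<subset> M2 - M1"
      using e eaM2 ebM2 unfolding M1'_def R_def by auto
  qed
  moreover have "(\<Sum>e\<in>M1'. \<sigma> e) \<le> (\<Sum>e\<in>M1. \<sigma> e) + 4"
  proof -
    have fR: "finite R" using f1 unfolding R_def by auto
    have "(\<Sum>e\<in>M1'. \<sigma> e) = (\<Sum>e\<in>R. \<sigma> e) + \<sigma> e + \<sigma> {c,d}"
      unfolding M1'_def using fR eR cdR ecd by (simp add: sum.union_disjoint)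
    moreover have "(\<Sum>e\<in>M1. \<sigma> e) = (\<Sum>e\<in>R. \<sigma> e) + \<sigma> ea + \<sigma> eb"
    proof -
      have "(\<Sum>e\<in>M1. \<sigma> e) = (\<Sum>e\<in>R. \<sigma> e) + (\<Sum>e\<in>{ea,eb}. \<sigma> e)"
        unfolding R_def using sum.subset_diff[of "{ea,eb}" M1 \<sigma>] ea eb f1 by auto
      thus ?thesis using eaeb by simp
    qed
    moreover have "\<sigma> e \<le> 1" "\<sigma> {c,d} \<le> 1" "\<sigma> ea \<ge> -1" "\<sigma> eb \<ge> -1"
      using sig e s2(1) cdE ea eb s1(1) by fastforce+
    ultimately show ?thesis by linarith
  qed
  ultimately show ?thesis by blast
qed

lemma ivt:
  assumes pm2: "perfect_matching m M2" and s2: "(\<Sum>e\<in>M2. \<sigma> e) \<ge> -2"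
    and sig: "\<forall>e\<in>edges_K m. \<sigma> e \<in> {-1,1::int}"
  shows "\<forall>M1. perfect_matching m M1 \<longrightarrow> card (M2 - M1) = k \<longrightarrow> (\<Sum>e\<in>M1. \<sigma> e) \<le> 2
     \<longrightarrow> (\<exists>M. perfect_matching m M \<and> \<bar>\<Sum>e\<in>M. \<sigma> e\<bar> \<le> 2)"
proof (induction k rule: less_induct)
  case (less k)
  show ?case
  proof (intro allI impI)
    fix M1 assume h: "perfect_matching m M1" "card (M2 - M1) = k" "(\<Sum>e\<in>M1. \<sigma> e) \<le> 2"
    show "\<exists>M. perfect_matching m M \<and> \<bar>\<Sum>e\<in>M. \<sigma> e\<bar> \<le> 2"
    proof (cases "(\<Sum>e\<in>M1. \<sigma> e) \<ge> -2")
      case True thus ?thesis using h by (intro exI[of _ M1]) auto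
    next
      case False
      hence "M1 \<noteq> M2" using s2 by auto
      from switch[OF h(1) pm2 this sig] obtain M1' where
        "perfect_matching m M1'" "card (M2 - M1') < card (M2 - M1)"
        "(\<Sum>e\<in>M1'. \<sigma> e) \<le> (\<Sum>e\<in>M1. \<sigma> e) + 4" by blast
      thus ?thesis using less.IH[of "card (M2 - M1')"] h False by force
    qed
  qed
qed




lemma pair_up:
  "finite S \<Longrightarrow> even (card S) \<Longrightarrow> \<exists>P. pdisj P \<and> \<Union>P = S \<and> (\<forall>e\<in>P. card e = 2)"
proof (induction "card S" arbitrary: S rule: less_induct)
  case less
  show ?case
  proof (cases "S = {}")
    case True thus ?thesis by (intro exI[of _ "{}"]) (auto simp: pdisj_def)
  next
    case False
    then obtain x where x: "x \<in> S" by auto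
    have "card S \<noteq> 1" using less.prems by auto
    have "S - {x} \<noteq> {}"
    proof
      assume "S - {x} = {}" hence "S = {x}" using x by auto
      thus False using \<open>card S \<noteq> 1\<close> by simp
    qed
    then obtain y where y: "y \<in> S" "y \<noteq> x" by auto
    define S' where "S' = S - {x,y}"
    have cS': "card S' = card S - 2" unfolding S'_def using x y less.prems(1) by (simp add: card_Diff_subset)
    have "card S \<ge> 2" using x y less.prems(1)
      by (metis card_2_iff card_mono empty_subsetI insert_subset)
    hence "card S' < card S" "even (card S')" using cS' less.prems(2) by auto
    moreover have "finite S'" using less.prems(1) S'_def by auto
    ultimately obtain P where P: "pdisj P" "\<Union>P = S'" "\<forall>e\<in>P. card e = 2" using less.hyps by blast
    have nin: "{x,y} \<notin> P" using P(2) S'_def by auto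
    show ?thesis
    proof (intro exI[of _ "insert {x,y} P"] conjI)
      show "pdisj (insert {x, y} P)" using P(1,2) nin unfolding pdisj_def S'_def by blast
      show "\<Union> (insert {x, y} P) = S" using P(2) x y unfolding S'_def by auto
      show "\<forall>e\<in>insert {x, y} P. card e = 2" using P(3) y by auto
    qed
  qed
qed

lemma extend_pm:
  assumes "A \<subseteq> edges_K m" "pdisj A" "even m"
  shows "\<exists>M. perfect_matching m M \<and> A \<subseteq> M"
proof -
  define S where "S = {0..<m} - \<Union>A"
  have UA: "\<Union>A \<subseteq> {0..<m}" using assms(1) edges_K_iff by blast
  have "card S = m - 2 * card A" unfolding S_def using card_Diff_subset[OF _ UA] card_Union_edges[OF assms(1,2)]
    by (metis card_atLeastLessThan diff_zero finite_subset UA finite_atLeastLessThan)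
  moreover have "2 * card A \<le> m" using card_mono[OF _ UA] card_Union_edges[OF assms(1,2)] by simp
  ultimately have "even (card S)" using assms(3) by auto
  then obtain P where P: "pdisj P" "\<Union>P = S" "\<forall>e\<in>P. card e = 2" using pair_up[of S] S_def by auto
  show ?thesis
  proof (intro exI[of _ "A \<union> P"] conjI)
    show "A \<subseteq> A \<union> P" by auto
    show "perfect_matching m (A \<union> P)" unfolding pm_iff
    proof (intro conjI)
      have "P \<subseteq> edges_K m"
      proof
        fix e assume "e \<in> P"
        hence "e \<subseteq> {0..<m}" "card e = 2" using P(2,3) S_def by auto
        thus "e \<in> edges_K m" using edges_K_iff by blast
      qed
      thus "A \<union> P \<subseteq> edges_K m" using assms(1) by auto
      show "\<Union> (A \<union> P) = {0..<m}" using P(2) UA S_def by auto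
      show "pdisj (A \<union> P)" using assms(2) P(1,2) unfolding pdisj_def S_def by blast
    qed
  qed
qed




lemma two_choose2: "2 * (k choose 2) = k * (k - 1)"
  by (simp add: choose_two) (metis dvd_mult_div_cancel even_mult_iff odd_two_times_div_two_nat dvd_triv_left
      Suc_pred bot_nat_0.not_eq_extremum diff_is_0_eq' even_Suc mult_0_right nat_le_linear)

lemma eg_arith:
  fixes p t m :: nat
  assumes "p \<le> t" "3 * t + 1 \<le> m"
  shows "2 * ((2*t choose 2) - (p choose 2) + (p * (m - 2*t) + 2 * (t - p))) \<le> t * (2*m - t - 1)"
proof -
  have c1: "2 * (2*t choose 2) = 2*t*(2*t-1)" by (rule two_choose2)
  have c2: "2 * (p choose 2) = p*(p-1)" by (rule two_choose2)
  have "p*(p-1) \<le> 2*t*(2*t-1)" using assms(1) by (intro mult_le_mono) auto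
  hence le: "p choose 2 \<le> 2*t choose 2" using c1 c2 by linarith
  define u where "u = m - 2*t"
  have u: "int u = int m - 2 * int t" "int u \<ge> int t + 1" using assms unfolding u_def by auto
  have key: "0 \<le> (int t - int p) * (2 * int u - int t - int p - 3)"
  proof (cases "p = t")
    case True thus ?thesis by simp
  next
    case False hence "p + 1 \<le> t" using assms by auto
    thus ?thesis using u by (intro mult_nonneg_nonneg) auto
  qed
  have L: "int (2 * ((2*t choose 2) - (p choose 2) + (p * (m - 2*t) + 2 * (t - p))))
     = int (2*t*(2*t-1)) - int (p*(p-1)) + 2 * int p * int u + 4 * (int t - int p)"
    using c1 c2 le assms(1) unfolding u_def[symmetric] by (simp add: of_nat_diff algebra_simps)
  have R: "int (t * (2*m - t - 1)) = int t * (2 * int m - int t - 1)" using assms by (simp add: of_nat_diff)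
  have "int (2*t*(2*t-1)) = 2 * int t * (2 * int t - 1)" by (cases t) (auto simp: algebra_simps)
  moreover have "int (p*(p-1)) = int p * (int p - 1)" by (cases p) (auto simp: algebra_simps)
  ultimately have "int (2 * ((2*t choose 2) - (p choose 2) + (p * (m - 2*t) + 2 * (t - p)))) \<le> int (t * (2*m - t - 1))"
    using L R key u by (simp add: algebra_simps)
  thus ?thesis by linarith
qed



lemma augment:
  assumes E: "E \<subseteq> edges_K m" and M: "M \<subseteq> E" "pdisj M" and S: "S \<subseteq> M"
    and N: "N \<subseteq> E" "pdisj N" "\<forall>f\<in>N. f \<inter> \<Union>(M - S) = {}" "card N = card S + 1"
  shows "(M - S) \<union> N \<subseteq> E \<and> pdisj ((M - S) \<union> N) \<and> card ((M - S) \<union> N) = card M + 1"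
proof -
  have "M \<subseteq> edges_K m" "N \<subseteq> edges_K m" using M(1) N(1) E by auto
  hence fM: "finite M" "finite N" using finite_sub_edges by auto
  have ne: "{} \<notin> N"
  proof
    assume "{} \<in> N"
    hence "{} \<in> edges_K m" using N(1) E by blast
    thus False unfolding edges_K_iff by simp
  qed
  have dis: "(M - S) \<inter> N = {}"
  proof (rule ccontr)
    assume "(M - S) \<inter> N \<noteq> {}"
    then obtain f where f: "f \<in> M - S" "f \<in> N" by blast
    hence "f \<inter> \<Union>(M - S) = {}" using N(3) by blast
    moreover have "f \<subseteq> \<Union>(M - S)" using f(1) by blast
    ultimately have "f = {}" by blast
    thus False using ne f(2) by simp
  qed
  have fMS: "finite (M - S)" using fM by simp
  have c1: "card ((M - S) \<union> N) = card (M - S) + card N" using card_Un_disjoint[OF fMS fM(2) dis] .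
  have fS: "finite S" using S fM(1) finite_subset by blast
  have c2: "card (M - S) = card M - card S" using card_Diff_subset[OF fS S] .
  have c3: "card S \<le> card M" using card_mono[OF fM(1) S] .
  have c: "card ((M - S) \<union> N) = card M + 1" using c1 c2 c3 N(4) by simp
  have "pdisj ((M - S) \<union> N)" unfolding pdisj_def
  proof (intro ballI impI)
    fix e f assume ef: "e \<in> (M - S) \<union> N" "f \<in> (M - S) \<union> N" "e \<noteq> f"
    show "e \<inter> f = {}"
    proof (cases "e \<in> N")
      case True
      show ?thesis
      proof (cases "f \<in> N")
        case True thus ?thesis using \<open>e \<in> N\<close> ef(3) N(2) unfolding pdisj_def by blast
      next
        case False hence "f \<in> M - S" using ef by blast
        hence "f \<subseteq> \<Union>(M - S)" by blast
        thus ?thesis using N(3) \<open>e \<in> N\<close> by blast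
      qed
    next
      case False hence eMS: "e \<in> M - S" using ef by blast
      show ?thesis
      proof (cases "f \<in> N")
        case True
        have "e \<subseteq> \<Union>(M - S)" using eMS by blast
        thus ?thesis using N(3) True by blast
      next
        case False hence "f \<in> M - S" using ef by blast
        thus ?thesis using eMS ef(3) M(2) unfolding pdisj_def by blast
      qed
    qed
  qed
  thus ?thesis using c M N by auto
qed

lemma pdisj2: "X \<inter> Y = {} \<Longrightarrow> pdisj {X,Y}" unfolding pdisj_def by auto
lemma pdisj3: "X \<inter> Y = {} \<Longrightarrow> X \<inter> Z = {} \<Longrightarrow> Y \<inter> Z = {} \<Longrightarrow> pdisj {X,Y,Z}"
  unfolding pdisj_def by auto

lemma EG:
  assumes E: "E \<subseteq> edges_K m" and M: "M \<subseteq> E" "pdisj M"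
    and max: "\<forall>M'. M' \<subseteq> E \<and> pdisj M' \<longrightarrow> card M' \<le> card M"
    and big: "3 * card M + 1 \<le> m"
  shows "2 * card E \<le> card M * (2*m - card M - 1)"
proof -
  define t where "t = card M"
  have ME: "M \<subseteq> edges_K m" using E M by auto
  have fM: "finite M" using ME finite_sub_edges by blast
  have fE: "finite E" using E finite_sub_edges by blast
  have noaug: False if "S \<subseteq> M" "N \<subseteq> E" "pdisj N" "\<forall>f\<in>N. f \<inter> \<Union>(M - S) = {}" "card N = card S + 1" for S N
  proof -
    have h: "(M - S) \<union> N \<subseteq> E \<and> pdisj ((M - S) \<union> N) \<and> card ((M - S) \<union> N) = card M + 1"
      by (rule augment[OF E M that])
    hence "card ((M - S) \<union> N) \<le> card M" using max by blast
    thus False using h by linarith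
  qed
  have edge2: "\<exists>a b. e = {a,b} \<and> a \<noteq> b \<and> a < m \<and> b < m" if "e \<in> E" for e
    using that E unfolding edges_K_def by blast
  define W where "W = \<Union>M"
  define U where "U = {0..<m} - W"
  have WV: "W \<subseteq> {0..<m}" unfolding W_def using ME edges_K_iff by blast
  have cW: "card W = 2 * t" unfolding W_def t_def using card_Union_edges[OF ME M(2)] .
  have cU: "card U = m - 2 * t" unfolding U_def using card_Diff_subset[OF _ WV] cW
    by (metis card_atLeastLessThan diff_zero finite_subset WV finite_atLeastLessThan)
  have fU: "finite U" unfolding U_def by auto
  have UW: "U \<inter> W = {}" unfolding U_def by auto
  define NU where "NU v = {u\<in>U. {v,u} \<in> E}" for v
  define d where "d v = card (NU v)" for v
  have fNU: "finite (NU v)" for v unfolding NU_def using fU by auto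
  have NUU: "NU v \<subseteq> U" for v unfolding NU_def by auto
  have dU: "d v \<le> card U" for v unfolding d_def using card_mono[OF fU NUU] .
  have inW: "x \<in> W" if "x \<in> e" "e \<in> M" for x e using that W_def by auto
  have notother: "x \<notin> f" if "x \<in> e" "e \<in> M" "f \<in> M" "e \<noteq> f" for x e f
    using that M(2) unfolding pdisj_def by blast
  have A1: False if "u \<in> U" "w \<in> U" "{u,w} \<in> E" for u w
  proof (rule noaug[of "{}" "{{u,w}}"])
    show "\<forall>f\<in>{{u, w}}. f \<inter> \<Union>(M - {}) = {}" using that UW W_def by auto
  qed (use that in \<open>auto simp: pdisj_def\<close>)
  have A2: False if "e \<in> M" "e = {a,b}" "a \<noteq> b" "u \<in> NU a" "w \<in> NU b" "u \<noteq> w" for e a b u w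
  proof -
    have uw: "u \<in> U" "w \<in> U" "{a,u} \<in> E" "{b,w} \<in> E" using that NU_def by auto
    have ab: "a \<in> W" "b \<in> W" using that inW[of a e] inW[of b e] by auto
    have d1: "u \<noteq> a" "u \<noteq> b" "w \<noteq> a" "w \<noteq> b" using uw ab UW by auto
    show False
    proof (rule noaug[of "{e}" "{{u,a},{b,w}}"])
      show "{e} \<subseteq> M" using that by auto
      show "{{u, a}, {b, w}} \<subseteq> E" using uw by (auto simp: insert_commute)
      show "pdisj {{u, a}, {b, w}}" using d1 \<open>a \<noteq> b\<close> \<open>u \<noteq> w\<close> by (intro pdisj2) auto
      have "{u,a} \<noteq> {b,w}" using d1 \<open>u \<noteq> w\<close> by auto
      thus "card {{u, a}, {b, w}} = card {e} + 1" by simp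
      show "\<forall>f\<in>{{u, a}, {b, w}}. f \<inter> \<Union>(M - {e}) = {}"
        using uw UW W_def notother[of a e] notother[of b e] that by auto
    qed
  qed
  have A3: False if "e1 \<in> M" "e2 \<in> M" "e1 \<noteq> e2" "e1 = {a1,b1}" "e2 = {a2,b2}" "a1 \<noteq> b1" "a2 \<noteq> b2"
     "u \<in> NU a1" "w \<in> NU a2" "u \<noteq> w" "{b1,b2} \<in> E" for e1 e2 a1 b1 a2 b2 u w
  proof -
    have uw: "u \<in> U" "w \<in> U" "{a1,u} \<in> E" "{a2,w} \<in> E" using that NU_def by auto
    have ab: "a1 \<in> W" "b1 \<in> W" "a2 \<in> W" "b2 \<in> W" using that inW[of a1 e1] inW[of b1 e1] inW[of a2 e2] inW[of b2 e2] by auto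
    have d1: "u \<noteq> a1" "u \<noteq> b1" "u \<noteq> a2" "u \<noteq> b2" "w \<noteq> a1" "w \<noteq> b1" "w \<noteq> a2" "w \<noteq> b2"
      using uw ab UW by auto
    have d2: "a1 \<notin> e2" "b1 \<notin> e2" using notother[of a1 e1 e2] notother[of b1 e1 e2] that by auto
    hence d3: "a1 \<noteq> a2" "a1 \<noteq> b2" "b1 \<noteq> a2" "b1 \<noteq> b2" using that by auto
    show False
    proof (rule noaug[of "{e1,e2}" "{{u,a1},{b1,b2},{a2,w}}"])
      show "{e1,e2} \<subseteq> M" using that by auto
      show "{{u,a1},{b1,b2},{a2,w}} \<subseteq> E" using uw that by (auto simp: insert_commute)
      show "pdisj {{u,a1},{b1,b2},{a2,w}}" using d1 d3 that(6,7) \<open>u \<noteq> w\<close> by (intro pdisj3) auto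
      have n1: "{u,a1} \<noteq> {b1,b2}" using d1 by auto
      have n2: "{u,a1} \<noteq> {a2,w}" using d1 d3 \<open>u \<noteq> w\<close> by auto
      have n3: "{b1,b2} \<noteq> {a2,w}" using d1 d3 by auto
      have "card {{u,a1},{b1,b2},{a2,w}} = 3" using n1 n2 n3 by simp
      moreover have "card {e1,e2} = 2" using that(3) by simp
      ultimately show "card {{u,a1},{b1,b2},{a2,w}} = card {e1,e2} + 1" by simp
      have G: "g \<inter> {u,a1,b1,b2,a2,w} = {}" if g: "g \<in> M - {e1,e2}" for g
      proof -
        have gg: "g \<in> M" "g \<noteq> e1" "g \<noteq> e2" using g by auto
        have "a1 \<notin> g" "b1 \<notin> g" using notother[of a1 e1 g] notother[of b1 e1 g] gg \<open>e1 = {a1,b1}\<close> \<open>e1 \<in> M\<close> by auto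
        moreover have "a2 \<notin> g" "b2 \<notin> g" using notother[of a2 e2 g] notother[of b2 e2 g] gg \<open>e2 = {a2,b2}\<close> \<open>e2 \<in> M\<close> by auto
        moreover have "g \<subseteq> W" using gg(1) W_def by auto
        hence "u \<notin> g" "w \<notin> g" using uw(1,2) UW by auto
        ultimately show ?thesis by auto
      qed
      show "\<forall>f\<in>{{u,a1},{b1,b2},{a2,w}}. f \<inter> \<Union>(M - {e1,e2}) = {}"
      proof
        fix f assume "f \<in> {{u,a1},{b1,b2},{a2,w}}"
        hence "f \<subseteq> {u,a1,b1,b2,a2,w}" by auto
        thus "f \<inter> \<Union>(M - {e1,e2}) = {}" using G by blast
      qed
    qed
  qed
  have eM: "\<exists>a b. e = {a,b} \<and> a \<noteq> b" if "e \<in> M" for e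
    using edge2 that M(1) by blast
  define R where "R = {v\<in>W. 2 \<le> d v}"
  have R1: "d b = 0" if "e \<in> M" "e = {a,b}" "a \<noteq> b" "a \<in> R" for e a b
  proof (rule ccontr)
    assume "d b \<noteq> 0"
    then obtain w where w: "w \<in> NU b" unfolding d_def by fastforce
    have "2 \<le> card (NU a)" using that(4) unfolding R_def d_def by auto
    moreover have "card (NU a) - card {w} \<le> card (NU a - {w})" by (rule diff_card_le_card_Diff) auto
    ultimately have "card (NU a - {w}) \<noteq> 0" by simp
    hence "NU a - {w} \<noteq> {}" by (metis card.empty)
    then obtain u where "u \<in> NU a" "u \<noteq> w" by blast
    thus False using A2[OF that(1-3) _ w] by blast
  qed
  define Mr where "Mr = {e\<in>M. e \<inter> R \<noteq> {}}"
  define p where "p = card Mr"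
  have fMr: "finite Mr" using fM Mr_def by auto
  have pt: "p \<le> t" unfolding p_def t_def Mr_def using fM by (intro card_mono) auto
  have fe: "finite e" if "e \<in> M" for e using eM[OF that] by auto
  have sumW: "(\<Sum>v\<in>W. d v) = (\<Sum>e\<in>M. \<Sum>v\<in>e. d v)"
    unfolding W_def using sum.Union_disjoint[of M d] fe M(2) unfolding pdisj_def by (simp add: comp_def)
  have per: "(\<Sum>v\<in>e. d v) \<le> (if e \<in> Mr then card U else 2)" if eM0: "e \<in> M" for e
  proof -
    obtain a b where ab: "e = {a,b}" "a \<noteq> b" using eM[OF eM0] by blast
    have abW: "a \<in> W" "b \<in> W" using inW[of a e] inW[of b e] eM0 ab by auto
    have s: "(\<Sum>v\<in>e. d v) = d a + d b" using ab by simp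
    show ?thesis
    proof (cases "e \<in> Mr")
      case True
      hence "a \<in> R \<or> b \<in> R" unfolding Mr_def using ab by auto
      moreover have "a \<in> R \<Longrightarrow> d b = 0" using R1[OF eM0 ab] by blast
      moreover have "b \<in> R \<Longrightarrow> d a = 0" using R1[of e b a] eM0 ab by (auto simp: insert_commute)
      ultimately show ?thesis using s dU[of a] dU[of b] True by auto
    next
      case False
      hence "a \<notin> R" "b \<notin> R" unfolding Mr_def using ab eM0 by auto
      hence "d a \<le> 1" "d b \<le> 1" using abW unfolding R_def by auto
      thus ?thesis using s False by auto
    qed
  qed
  have sumif: "(\<Sum>e\<in>M. if e \<in> Mr then card U else 2) = p * card U + 2 * (t - p)"
  proof -
    have "(\<Sum>e\<in>M. if e \<in> Mr then card U else 2) = (\<Sum>e\<in>M \<inter> {e. e \<in> Mr}. card U) + (\<Sum>e\<in>M \<inter> - {e. e \<in> Mr}. 2)"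
      by (rule sum.If_cases[OF fM])
    moreover have "M \<inter> {e. e \<in> Mr} = Mr" unfolding Mr_def by auto
    moreover have "M \<inter> - {e. e \<in> Mr} = M - Mr" by auto
    moreover have "card (M - Mr) = t - p" unfolding t_def p_def using fM Mr_def by (simp add: card_Diff_subset)
    ultimately show ?thesis unfolding p_def by simp
  qed
  have dsum: "(\<Sum>v\<in>W. d v) \<le> p * card U + 2 * (t - p)"
    using sumW sum_mono[of M "\<lambda>e. \<Sum>v\<in>e. d v" "\<lambda>e. if e \<in> Mr then card U else 2"] per sumif by simp
  define B where "B = (\<Union>e\<in>Mr. e - R)"
  have single: "\<exists>x a. e - R = {x} \<and> a \<in> R \<and> e = {a,x} \<and> a \<noteq> x" if eMr: "e \<in> Mr" for e
  proof -
    have eM1: "e \<in> M" using eMr Mr_def by auto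
    obtain a b where ab: "e = {a,b}" "a \<noteq> b" using eM[OF eM1] by blast
    have "a \<in> R \<or> b \<in> R" using eMr ab unfolding Mr_def by auto
    thus ?thesis
    proof
      assume aR: "a \<in> R"
      hence "d b = 0" using R1[OF eM1 ab aR] by blast
      hence "b \<notin> R" unfolding R_def by auto
      thus ?thesis using aR ab by (intro exI[of _ b] exI[of _ a]) auto
    next
      assume bR: "b \<in> R"
      hence "d a = 0" using R1[of e b a] eM1 ab by (auto simp: insert_commute)
      hence "a \<notin> R" unfolding R_def by auto
      thus ?thesis using bR ab by (intro exI[of _ a] exI[of _ b]) auto
    qed
  qed
  have cB: "card B = p" unfolding B_def p_def
  proof -
    have "card (\<Union>e\<in>Mr. e - R) = (\<Sum>e\<in>Mr. card (e - R))"
    proof (rule card_UN_disjoint[OF fMr])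
      show "\<forall>i\<in>Mr. finite (i - R)" using fe Mr_def by auto
      show "\<forall>i\<in>Mr. \<forall>j\<in>Mr. i \<noteq> j \<longrightarrow> (i - R) \<inter> (j - R) = {}"
        using M(2) unfolding Mr_def pdisj_def by blast
    qed
    also have "\<dots> = (\<Sum>e\<in>Mr. 1)"
    proof (rule sum.cong)
      fix e assume "e \<in> Mr"
      then obtain x a where "e - R = {x}" using single by blast
      thus "card (e - R) = 1" by simp
    qed simp
    finally show "card (\<Union>e\<in>Mr. e - R) = card Mr" by simp
  qed
  have BW: "B \<subseteq> W" unfolding B_def Mr_def W_def by auto
  have Bind: False if xy: "x \<in> B" "y \<in> B" "x \<noteq> y" "{x,y} \<in> E" for x y
  proof -
    obtain e1 where e1: "e1 \<in> Mr" "x \<in> e1 - R" using xy(1) B_def by auto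
    obtain e2 where e2: "e2 \<in> Mr" "y \<in> e2 - R" using xy(2) B_def by auto
    obtain x' a1 where s1: "e1 - R = {x'}" "a1 \<in> R" "e1 = {a1,x'}" "a1 \<noteq> x'" using single[OF e1(1)] by blast
    obtain y' a2 where s2: "e2 - R = {y'}" "a2 \<in> R" "e2 = {a2,y'}" "a2 \<noteq> y'" using single[OF e2(1)] by blast
    have xx: "x' = x" "y' = y" using s1(1) s2(1) e1(2) e2(2) by auto
    have ne: "e1 \<noteq> e2" using s1(1) s2(1) xx xy(3) by auto
    have "2 \<le> card (NU a1)" using s1(2) unfolding R_def d_def by auto
    hence "NU a1 \<noteq> {}" by (metis card.empty not_numeral_le_zero)
    then obtain u where u: "u \<in> NU a1" by blast
    have "2 \<le> card (NU a2)" using s2(2) unfolding R_def d_def by auto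
    moreover have "card (NU a2) - card {u} \<le> card (NU a2 - {u})" by (rule diff_card_le_card_Diff) auto
    ultimately have "card (NU a2 - {u}) \<noteq> 0" by simp
    hence "NU a2 - {u} \<noteq> {}" by (metis card.empty)
    then obtain w where w: "w \<in> NU a2" "u \<noteq> w" by blast
    have "e1 \<in> M" "e2 \<in> M" using e1 e2 Mr_def by auto
    thus False using A3[of e1 e2 a1 x a2 y u w] ne s1 s2 xx u w xy(4) by auto
  qed
  define EWW where "EWW = {e. e \<subseteq> W \<and> card e = 2} - {e. e \<subseteq> B \<and> card e = 2}"
  define EWU where "EWU = (\<Union>v\<in>W. (\<lambda>u. {v,u}) ` NU v)"
  have Esub: "E \<subseteq> EWW \<union> EWU"
  proof
    fix f assume fE: "f \<in> E"
    obtain x y where xy: "f = {x,y}" "x \<noteq> y" "x < m" "y < m" using edge2[OF fE] by blast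
    have xs: "x \<in> W \<or> x \<in> U" "y \<in> W \<or> y \<in> U" using xy U_def by auto
    show "f \<in> EWW \<union> EWU"
    proof (cases "x \<in> W")
      case xW: True
      show ?thesis
      proof (cases "y \<in> W")
        case True
        have "\<not> f \<subseteq> B" using Bind[of x y] fE xy by auto
        thus ?thesis using xW True xy unfolding EWW_def by auto
      next
        case False
        hence "y \<in> NU x" using xs fE xy NU_def by auto
        thus ?thesis using xW xy unfolding EWU_def by auto
      qed
    next
      case xU: False
      hence xU': "x \<in> U" using xs by auto
      show ?thesis
      proof (cases "y \<in> W")
        case True
        have "{y,x} \<in> E" using fE xy by (simp add: insert_commute)
        hence "x \<in> NU y" using xU' NU_def by auto
        moreover have "f = {y,x}" using xy by auto
        ultimately show ?thesis using True unfolding EWU_def by auto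
      next
        case False
        hence "y \<in> U" using xs by auto
        thus ?thesis using A1[OF xU'] fE xy by auto
      qed
    qed
  qed
  have fW: "finite W" using WV finite_subset by blast
  have cWW: "card EWW = (2*t choose 2) - (p choose 2)"
  proof -
    have "{e. e \<subseteq> B \<and> card e = 2} \<subseteq> {e. e \<subseteq> W \<and> card e = 2}" using BW by auto
    moreover have "finite {e. e \<subseteq> B \<and> card e = 2}" using fW BW finite_subset[of B W] by auto
    ultimately have "card EWW = card {e. e \<subseteq> W \<and> card e = 2} - card {e. e \<subseteq> B \<and> card e = 2}"
      unfolding EWW_def by (simp add: card_Diff_subset)
    thus ?thesis using n_subsets[OF fW, of 2] n_subsets[of B 2] fW BW finite_subset[of B W] cW cB by simp
  qed
  have cWU: "card EWU \<le> (\<Sum>v\<in>W. d v)"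
  proof -
    have "card EWU \<le> (\<Sum>v\<in>W. card ((\<lambda>u. {v,u}) ` NU v))" unfolding EWU_def by (rule card_UN_le[OF fW])
    also have "\<dots> \<le> (\<Sum>v\<in>W. d v)" unfolding d_def by (intro sum_mono card_image_le fNU)
    finally show ?thesis .
  qed
  have fEWW: "finite EWW" unfolding EWW_def using fW by auto
  have fEWU: "finite EWU" unfolding EWU_def using fW fNU by auto
  have "card E \<le> card (EWW \<union> EWU)" using Esub fEWW fEWU by (intro card_mono) auto
  also have "\<dots> \<le> card EWW + card EWU" by (rule card_Un_le)
  finally have cE: "card E \<le> (2*t choose 2) - (p choose 2) + (p * (m - 2*t) + 2 * (t - p))"
    using cWW cWU dsum cU by (simp only: cU)
  have "3 * t + 1 \<le> m" using big t_def by simp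
  have "2 * card E \<le> 2 * ((2*t choose 2) - (p choose 2) + (p * (m - 2*t) + 2 * (t - p)))"
    using cE by (rule mult_le_mono2)
  from order_trans[OF this eg_arith[OF pt \<open>3 * t + 1 \<le> m\<close>]] have "2 * card E \<le> t * (2*m - t - 1)" .
  thus ?thesis unfolding t_def .
qed



lemma low:
  fixes n :: nat and \<sigma> :: "nat set \<Rightarrow> int"
  assumes n1: "n \<ge> 1" and sig: "\<forall>e\<in>edges_K (4 * n). \<sigma> e \<in> {-1, 1}"
    and tot: "(\<Sum>e\<in>edges_K (4 * n). \<sigma> e) < int (n^2 + 11 * n + 2)"
  shows "\<exists>M. perfect_matching (4 * n) M \<and> (\<Sum>e\<in>M. \<sigma> e) \<le> 2"
proof -
  define m where "m = 4 * n"
  define neg where "neg = {e\<in>edges_K m. \<sigma> e = -1}"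
  have negE: "neg \<subseteq> edges_K m" unfolding neg_def by auto
  have fneg: "finite neg" using negE finite_sub_edges by blast
  define CS where "CS = card ` {M'. M' \<subseteq> neg \<and> pdisj M'}"
  have fCS: "finite CS" unfolding CS_def using fneg by auto
  have "0 \<in> CS" unfolding CS_def by (rule image_eqI[of _ _ "{}"]) (auto simp: pdisj_def)
  hence "Max CS \<in> CS" using fCS Max_in by blast
  then obtain M0 where M0: "M0 \<subseteq> neg" "pdisj M0" "card M0 = Max CS" unfolding CS_def by auto
  have max: "\<forall>M'. M' \<subseteq> neg \<and> pdisj M' \<longrightarrow> card M' \<le> card M0"
    using M0(3) fCS unfolding CS_def by auto
  have big: "n - 1 \<le> card M0"
  proof (rule ccontr)
    assume "\<not> n - 1 \<le> card M0"
    hence tl: "card M0 + 2 \<le> n" by simp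
    define t where "t = card M0"
    have "3 * card M0 + 1 \<le> m" using tl m_def by simp
    from EG[OF negE M0(1,2) max this] have eg: "2 * card neg \<le> t * (2 * m - t - 1)" unfolding t_def .
    have "int (t * (2 * m - t - 1)) = int t * (8 * int n - int t - 1)" using tl m_def t_def by (simp add: of_nat_diff)
    moreover have "int t * (8 * int n - int t - 1) \<le> (int n - 2) * (7 * int n + 1)"
    proof -
      have "0 \<le> (int n - 2 - int t) * (8 * int n - 1 - (int n - 2) - int t)"
        using tl t_def by (intro mult_nonneg_nonneg) auto
      thus ?thesis by (simp add: algebra_simps)
    qed
    ultimately have neg_le: "2 * int (card neg) \<le> (int n - 2) * (7 * int n + 1)" using eg by linarith
    have "(\<Sum>e\<in>edges_K m. \<sigma> e) = int (card (edges_K m)) - 2 * int (card {e\<in>edges_K m. \<sigma> e = -1})"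
      using sum_pm1[OF finite_edges_K] sig m_def by auto
    moreover have "2 * card (edges_K m) = m * (m - 1)" unfolding card_edges_K by (rule two_choose2)
    ultimately have "(\<Sum>e\<in>edges_K m. \<sigma> e) * 2 = int (m * (m - 1)) - 4 * int (card neg)"
      unfolding neg_def by linarith
    moreover have "int (m * (m - 1)) = 4 * int n * (4 * int n - 1)" using n1 m_def by (simp add: of_nat_diff)
    ultimately have "(\<Sum>e\<in>edges_K m. \<sigma> e) * 2 \<ge> 2 * int (n^2 + 11 * n + 2)"
      using neg_le by (simp add: algebra_simps power2_eq_square)
    thus False using tot m_def by simp
  qed
  obtain A where A: "A \<subseteq> M0" "card A = n - 1"
    using obtain_subset_with_card_n[OF big] by blast
  have AE: "A \<subseteq> edges_K m" using A(1) M0(1) negE by auto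
  have pA: "pdisj A" using M0(2) A(1) unfolding pdisj_def by blast
  obtain M where M: "perfect_matching m M" "A \<subseteq> M" using extend_pm[OF AE pA] m_def by auto
  have ME: "M \<subseteq> edges_K m" using M(1) pm_iff by blast
  have fM: "finite M" using ME finite_sub_edges by blast
  have "(\<Sum>e\<in>M. \<sigma> e) = int (card M) - 2 * int (card {e\<in>M. \<sigma> e = -1})"
    using sum_pm1[OF fM] sig ME m_def by blast
  moreover have "2 * card M = m" using pm_card[OF M(1)] .
  moreover have "A \<subseteq> {e\<in>M. \<sigma> e = -1}" using A(1) M0(1) M(2) neg_def by auto
  hence "n - 1 \<le> card {e\<in>M. \<sigma> e = -1}" using A(2) card_mono fM by (metis (no_types, lifting) finite_subset mem_Collect_eq subsetI)
  ultimately have "(\<Sum>e\<in>M. \<sigma> e) \<le> 2" using m_def n1 by linarith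
  thus ?thesis using M(1) m_def by blast
qed

theorem corollary4:
  fixes n :: nat and \<sigma> :: "nat set \<Rightarrow> int"
  assumes "n \<ge> 1"
    and "\<forall>e\<in>edges_K (4 * n). \<sigma> e \<in> {-1, 1}"
    and "\<bar>\<Sum>e\<in>edges_K (4 * n). \<sigma> e\<bar> < int (n^2 + 11 * n + 2)"
  shows "\<exists>M. perfect_matching (4 * n) M \<and> \<bar>\<Sum>e\<in>M. \<sigma> e\<bar> \<le> 2"
proof -
  obtain M1 where M1: "perfect_matching (4 * n) M1" "(\<Sum>e\<in>M1. \<sigma> e) \<le> 2"
    using low[OF assms(1,2)] assms(3) by fastforce
  have s2: "\<forall>e\<in>edges_K (4 * n). - \<sigma> e \<in> {-1, 1}" using assms(2) by auto
  have "(\<Sum>e\<in>edges_K (4 * n). - \<sigma> e) < int (n^2 + 11 * n + 2)"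
    using assms(3) by (simp add: sum_negf)
  then obtain M2 where M2: "perfect_matching (4 * n) M2" "(\<Sum>e\<in>M2. - \<sigma> e) \<le> 2"
    using low[OF assms(1) s2] by blast
  have "(\<Sum>e\<in>M2. \<sigma> e) \<ge> -2" using M2(2) by (simp add: sum_negf)
  from ivt[OF M2(1) this assms(2)] M1 show ?thesis by blast
qed


end
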